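(* Let $G$ be a full 1-plane graph satisfying the kite-edge standing assumption, let $S$ be a minimal separating set of $G$, and let $v\in S$. Let $(v,t_1)$ and $(v,t_2)$ be edges of $G$ with $t_1$ and $t_2$ in different flaps of $G-S$. Then there is a transition face $F$ of $G^\times$ incident to $v$ whose corresponding cell lies clockwise between $(v,t_1)$ and $(v,t_2)$ in $\rho_G(v)$.
   Context: A 1-plane graph is a graph $G$ with a good drawing in the plane (edges are simple curves; two edges intersect only at a common endpoint or a proper crossing; any two edges intersect at most once; no three edges cross at one point) in which every edge is crossed at most once. For a crossing of edges $(u,v)$ and $(w,x)$, its endpoints are $u,v,w,x$; two endpoints are consecutive if they are not $\{u,v\}$ and not $\{w,x\}$. $G$ is full 1-plane if for every crossing every two consecutive endpoints are adjacent. The planarization $G^\times$ replaces each crossing point by a new dummy vertex adjacent to the four endpoints. An edge joining consecutive endpoints $u,x$ of a crossing with dummy vertex $c$ is a kite edge if it is uncrossed and $G^\times$ has a face bounded exactly by it and $(u,c),(c,x)$. Standing assumption: for every crossing and every pair of adjacent consecutive endpoints, some edge joining them is a kite edge of that crossing. A separating set $S\subseteq V(G)$ is one with $G-S$ disconnected; the flaps are the connected components of $G-S$. A face $F$ of $G^\times$ is a transition face if $F$ is incident to an edge of $G^\times$ with both endpoints in $S$, or $F$ is incident to vertices from two different flaps. A cell is a connected region of the plane minus the drawing of $G$; each face of $G^\times$ corresponds to the cell occupying the same region. The rotation $\rho_G(v)$ is the clockwise cyclic order of the edges of $G$ incident to $v$ and the cells incident to $v$ around $v$ (obtained from the rotation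 at $v$ in $G^\times$ by replacing each edge by the corresponding edge of $G$ and each face by its cell). An element $y$ lies clockwise between $x$ and $z$ if $\rho_G(v)$ contains $x,y,z$ in this cyclic order. *)

theory Defs
  imports Main
begin

text \<open>
Combinatorial model of a 1-plane graph G via its planarization G^x, given as a
connected plane map (rotation system).  Vertices of G^x are the real vertices
(verts) and the dummy crossing vertices (cross).  Every edge of G^x is a pair of
opposite darts d, rev d; tail d is the vertex a dart starts at; nxt d is the
next dart clockwise around tail d.  The angle (corner) clockwise after dart d at
tail d lies in the face (of G^x, equivalently the cell of G) that is the orbit
of d under fstep d = rev (nxt d); a face is incident to a vertex w iff its orbit
contains a dart with tail w, and incident to an edge iff its orbit contains one
of the two darts of that edge.
\<close>

record ('a, 'd) pmap =
  verts :: "'a set"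
  cross :: "'a set"
  darts :: "'d set"
  tail  :: "'d \<Rightarrow> 'a"
  rev   :: "'d \<Rightarrow> 'd"
  nxt   :: "'d \<Rightarrow> 'd"

definition head :: "('a,'d) pmap \<Rightarrow> 'd \<Rightarrow> 'a" where
  "head M d = tail M (rev M d)"

definition fstep :: "('a,'d) pmap \<Rightarrow> 'd \<Rightarrow> 'd" where
  "fstep M d = rev M (nxt M d)"

definition face :: "('a,'d) pmap \<Rightarrow> 'd \<Rightarrow> 'd set" where
  "face M d = {(fstep M ^^ n) d | n. True}"

definition faces :: "('a,'d) pmap \<Rightarrow> 'd set set" where
  "faces M = face M ` darts M"

definition xadj :: "('a,'d) pmap \<Rightarrow> 'a \<Rightarrow> 'a \<Rightarrow> bool" where
  "xadj M a b = (\<exists>d\<in>darts M. tail M d = a \<and> head M d = b)"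

definition plane_map :: "('a,'d) pmap \<Rightarrow> bool" where
  "plane_map M \<longleftrightarrow>
     finite (verts M \<union> cross M) \<and> verts M \<noteq> {} \<and> verts M \<inter> cross M = {} \<and>
     finite (darts M) \<and>
     (\<forall>d\<in>darts M. tail M d \<in> verts M \<union> cross M) \<and>
     bij_betw (rev M) (darts M) (darts M) \<and>
     (\<forall>d\<in>darts M. rev M (rev M d) = d \<and> rev M d \<noteq> d \<and> tail M (rev M d) \<noteq> tail M d) \<and>
     bij_betw (nxt M) (darts M) (darts M) \<and>
     (\<forall>d\<in>darts M. tail M (nxt M d) = tail M d) \<and>
     (\<forall>d\<in>darts M. \<forall>d'\<in>darts M. tail M d = tail M d' \<longrightarrow> (\<exists>n. (nxt M ^^ n) d = d')) \<and>
     (\<forall>x\<in>verts M \<union> cross M. \<forall>y\<in>verts M \<union> cross M. (xadj M)\<^sup>*\<^sup>* x y) \<and>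
     (darts M \<noteq> {} \<longrightarrow>
        int (card (verts M \<union> cross M)) - int (card (darts M) div 2) + int (card (faces M)) = 2)"

text \<open>The other endpoint, in G, of the edge of G whose first half is dart d
  (d starting at a real vertex): if d ends at a crossing, continue straight
  through the crossing (the opposite dart in the rotation at the crossing).\<close>
definition gend :: "('a,'d) pmap \<Rightarrow> 'd \<Rightarrow> 'a" where
  "gend M d = (if head M d \<in> cross M then head M ((nxt M ^^ 2) (rev M d)) else head M d)"

definition gadj :: "('a,'d) pmap \<Rightarrow> 'a \<Rightarrow> 'a \<Rightarrow> bool" where
  "gadj M a b = (\<exists>d\<in>darts M. a \<in> verts M \<and> tail M d = a \<and> gend M d = b)"

text \<open>Good drawing with each edge crossed at most once: each dummy vertex has
  degree 4, its four neighbours are real vertices (no edge crossed twice) and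
  pairwise distinct (two edges meet at most once; crossing edges share no endpoint).\<close>
definition one_plane :: "('a,'d) pmap \<Rightarrow> bool" where
  "one_plane M \<longleftrightarrow>
     (\<forall>c\<in>cross M. card {d\<in>darts M. tail M d = c} = 4 \<and>
        card (head M ` {d\<in>darts M. tail M d = c}) = 4 \<and>
        (\<forall>d\<in>darts M. tail M d = c \<longrightarrow> head M d \<in> verts M))"

definition full :: "('a,'d) pmap \<Rightarrow> bool" where
  "full M \<longleftrightarrow> (\<forall>c\<in>cross M. \<forall>d\<in>darts M. tail M d = c \<longrightarrow>
      gadj M (head M d) (head M (nxt M d)))"

text \<open>For dart d from crossing c to u, with x = head of nxt d: there is an
  (uncrossed) edge e from u to x such that the face containing the angle between
  (c,u) and (c,x) is bounded exactly by (c,u), (x,c), e.\<close>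
definition kite_face :: "('a,'d) pmap \<Rightarrow> 'd \<Rightarrow> bool" where
  "kite_face M d \<longleftrightarrow>
     (fstep M ^^ 3) d = d \<and>
     tail M ((fstep M ^^ 2) d) = head M d \<and>
     head M ((fstep M ^^ 2) d) = head M (nxt M d) \<and>
     head M d \<in> verts M \<and> head M (nxt M d) \<in> verts M"

definition kite_assumption :: "('a,'d) pmap \<Rightarrow> bool" where
  "kite_assumption M \<longleftrightarrow> (\<forall>c\<in>cross M. \<forall>d\<in>darts M. tail M d = c \<longrightarrow>
      gadj M (head M d) (head M (nxt M d)) \<longrightarrow> kite_face M d)"

text \<open>Connectivity in G - S (a, b in the same flap).\<close>
definition conn_minus :: "('a,'d) pmap \<Rightarrow> 'a set \<Rightarrow> 'a \<Rightarrow> 'a \<Rightarrow> bool" where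
  "conn_minus M S a b =
     (\<lambda>x y. x \<in> verts M - S \<and> y \<in> verts M - S \<and> gadj M x y)\<^sup>*\<^sup>* a b"

definition separating :: "('a,'d) pmap \<Rightarrow> 'a set \<Rightarrow> bool" where
  "separating M S \<longleftrightarrow> S \<subseteq> verts M \<and>
     (\<exists>a\<in>verts M - S. \<exists>b\<in>verts M - S. \<not> conn_minus M S a b)"

definition min_separating :: "('a,'d) pmap \<Rightarrow> 'a set \<Rightarrow> bool" where
  "min_separating M S \<longleftrightarrow> separating M S \<and> (\<forall>S'. S' \<subset> S \<longrightarrow> \<not> separating M S')"

definition transition_face :: "('a,'d) pmap \<Rightarrow> 'a set \<Rightarrow> 'd set \<Rightarrow> bool" where
  "transition_face M S F \<longleftrightarrow> F \<in> faces M \<and>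
     ((\<exists>d\<in>F. tail M d \<in> S \<and> head M d \<in> S) \<or>
      (\<exists>d1\<in>F. \<exists>d2\<in>F. tail M d1 \<in> verts M - S \<and> tail M d2 \<in> verts M - S \<and>
          \<not> conn_minus M S (tail M d1) (tail M d2)))"

end

theory Submission
  imports Defs
begin

lemma funpow_in: "f ` A \<subseteq> A \<Longrightarrow> x \<in> A \<Longrightarrow> (f ^^ n) x \<in> A"
  by (induction n) auto

lemma funpow_cancel:
  assumes "inj_on f A" "f ` A \<subseteq> A" "x \<in> A" "(f ^^ (i + k)) x = (f ^^ i) x"
  shows "(f ^^ k) x = x"
  using assms(4)
proof (induction i)
  case 0 then show ?case by simp
next
  case (Suc i)
  have "f ((f ^^ (i + k)) x) = f ((f ^^ i) x)" using Suc.prems by simp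
  moreover have "(f ^^ (i + k)) x \<in> A" "(f ^^ i) x \<in> A" using funpow_in assms by metis+
  ultimately have "(f ^^ (i + k)) x = (f ^^ i) x" using assms(1) by (meson inj_onD)
  then show ?case using Suc.IH by simp
qed

lemma funpow_cycle:
  assumes "finite A" "inj_on f A" "f ` A \<subseteq> A" "x \<in> A"
  shows "\<exists>n>0. (f ^^ n) x = x"
proof -
  let ?g = "\<lambda>i. (f ^^ i) x"
  have "?g ` {..card A} \<subseteq> A" using funpow_in[OF assms(3,4)] by blast
  hence "\<not> inj_on ?g {..card A}"
  proof (intro notI)
    assume sub: "?g ` {..card A} \<subseteq> A" and inj: "inj_on ?g {..card A}"
    have "card {..card A} \<le> card A" using card_inj_on_le[OF inj sub assms(1)] .
    thus False by simp
  qed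
  then obtain i j where ij: "i \<le> card A" "j \<le> card A" "i \<noteq> j" "?g i = ?g j"
    unfolding inj_on_def by auto
  show ?thesis
  proof (cases "i < j")
    case True
    have "(f ^^ (i + (j - i))) x = (f ^^ i) x" using ij True by simp
    hence "(f ^^ (j - i)) x = x" using funpow_cancel[OF assms(2,3,4)] by blast
    thus ?thesis using True by (intro exI[of _ "j-i"]) auto
  next
    case False
    hence "j < i" using ij by simp
    have "(f ^^ (j + (i - j))) x = (f ^^ j) x" using ij \<open>j < i\<close> by simp
    hence "(f ^^ (i - j)) x = x" using funpow_cancel[OF assms(2,3,4)] by blast
    thus ?thesis using \<open>j < i\<close> by (intro exI[of _ "i-j"]) auto
  qed
qed

lemma funpow_mult_fix: "(f ^^ n) x = x \<Longrightarrow> (f ^^ (n * q)) x = x"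
proof (induction q)
  case 0 then show ?case by simp
next
  case (Suc q)
  have "(f ^^ (n * Suc q)) x = (f ^^ n) ((f ^^ (n * q)) x)"
    by (simp add: funpow_add)
  then show ?case using Suc by simp
qed

lemma funpow_mod:
  assumes "(f ^^ n) x = x" shows "(f ^^ k) x = (f ^^ (k mod n)) x"
proof -
  have e: "k mod n + n * (k div n) = k" by (rule mod_mult_div_eq)
  have "(f ^^ (k mod n + n * (k div n))) x = (f ^^ (k mod n)) ((f ^^ (n * (k div n))) x)"
    by (simp only: funpow_add comp_apply)
  hence "(f ^^ k) x = (f ^^ (k mod n)) ((f ^^ (n * (k div n))) x)" by (simp only: e)
  thus ?thesis using funpow_mult_fix[OF assms] by simp
qed

lemma funpow_card:
  assumes "finite A" "inj_on f A" "f ` A \<subseteq> A" "x \<in> A"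
    and tr: "\<forall>y\<in>A. \<exists>k. (f ^^ k) x = y"
  shows "(f ^^ card A) x = x"
proof -
  define n where "n = (LEAST n. n > 0 \<and> (f ^^ n) x = x)"
  have ex: "\<exists>n>0. (f ^^ n) x = x" using funpow_cycle[OF assms(1-4)] .
  have n: "n > 0 \<and> (f ^^ n) x = x" using LeastI_ex[OF ex] unfolding n_def .
  hence n: "n > 0" "(f ^^ n) x = x" by auto
  have least: "\<And>m. 0 < m \<Longrightarrow> m < n \<Longrightarrow> (f ^^ m) x \<noteq> x"
    using not_less_Least[of _ "\<lambda>n. n > 0 \<and> (f ^^ n) x = x"] unfolding n_def by blast
  have sub: "A \<subseteq> (\<lambda>i. (f ^^ i) x) ` {..<n}"
  proof
    fix y assume "y \<in> A"
    then obtain k where k: "(f ^^ k) x = y" using tr by blast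
    have "y = (f ^^ k) x" using k by simp
    also have "\<dots> = (f ^^ (k mod n)) x" by (rule funpow_mod[OF n(2)])
    finally have "y = (f ^^ (k mod n)) x" .
    moreover have "k mod n < n" using n(1) by simp
    ultimately show "y \<in> (\<lambda>i. (f ^^ i) x) ` {..<n}" by blast
  qed
  have inj: "inj_on (\<lambda>i. (f ^^ i) x) {..<n}"
  proof (rule inj_onI, rule ccontr)
    fix i j assume ij: "i \<in> {..<n}" "j \<in> {..<n}" "(f ^^ i) x = (f ^^ j) x" "i \<noteq> j"
    show False
    proof (cases "i < j")
      case True
      have "(f ^^ (i + (j - i))) x = (f ^^ i) x" using ij True by simp
      hence "(f ^^ (j - i)) x = x" using funpow_cancel[OF assms(2,3,4)] by blast
      moreover have "j - i < n" using ij(2) by auto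
      ultimately show False using least[of "j-i"] True by auto
    next
      case False
      hence "j < i" using ij by simp
      have "(f ^^ (j + (i - j))) x = (f ^^ j) x" using ij \<open>j < i\<close> by simp
      hence "(f ^^ (i - j)) x = x" using funpow_cancel[OF assms(2,3,4)] by blast
      moreover have "i - j < n" using ij(1) by auto
      ultimately show False using least[of "i-j"] \<open>j < i\<close> by auto
    qed
  qed
  have ci: "card ((\<lambda>i. (f ^^ i) x) ` {..<n}) = n" using card_image[OF inj] by simp
  have "card A \<le> card ((\<lambda>i. (f ^^ i) x) ` {..<n})" by (rule card_mono[OF _ sub]) simp
  hence "card A \<le> n" using ci by simp
  moreover have "(\<lambda>i. (f ^^ i) x) ` {..<n} \<subseteq> A" using funpow_in[OF assms(3,4)] by blast
  hence "card ((\<lambda>i. (f ^^ i) x) ` {..<n}) \<le> card A" by (rule card_mono[OF assms(1)])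
  hence "n \<le> card A" using ci by simp
  ultimately show ?thesis using n by simp
qed

lemma pm_facts:
  assumes "plane_map M"
  shows "finite (darts M)" "verts M \<inter> cross M = {}"
    "\<And>d. d \<in> darts M \<Longrightarrow> tail M d \<in> verts M \<union> cross M"
    "\<And>d. d \<in> darts M \<Longrightarrow> rev M d \<in> darts M"
    "\<And>d. d \<in> darts M \<Longrightarrow> nxt M d \<in> darts M"
    "\<And>d. d \<in> darts M \<Longrightarrow> rev M (rev M d) = d"
    "\<And>d. d \<in> darts M \<Longrightarrow> tail M (nxt M d) = tail M d"
    "inj_on (nxt M) (darts M)" "inj_on (rev M) (darts M)"
    "\<And>d d'. d \<in> darts M \<Longrightarrow> d' \<in> darts M \<Longrightarrow> tail M d = tail M d' \<Longrightarrow> \<exists>n. (nxt M ^^ n) d = d'"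
  using assms unfolding plane_map_def bij_betw_def by auto

lemma nxt_pow_in: "plane_map M \<Longrightarrow> d \<in> darts M \<Longrightarrow> (nxt M ^^ n) d \<in> darts M"
  by (induction n) (auto dest: pm_facts(5))

lemma nxt_pow_tail: "plane_map M \<Longrightarrow> d \<in> darts M \<Longrightarrow> tail M ((nxt M ^^ n) d) = tail M d"
  by (induction n) (auto simp: pm_facts(7) nxt_pow_in)

lemma nxt4:
  assumes pm: "plane_map M" and op: "one_plane M" and c: "c \<in> cross M"
    and r: "r \<in> darts M" "tail M r = c"
  shows "(nxt M ^^ 4) r = r"
proof -
  let ?A = "{d\<in>darts M. tail M d = c}"
  have "card ?A = 4" using op c unfolding one_plane_def by auto
  moreover have "(nxt M ^^ card ?A) r = r"
  proof (rule funpow_card)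
    show "finite ?A" using pm_facts(1)[OF pm] by simp
    show "inj_on (nxt M) ?A" using pm_facts(8)[OF pm] by (rule inj_on_subset) auto
    show "nxt M ` ?A \<subseteq> ?A" using pm_facts(5,7)[OF pm] by auto
    show "r \<in> ?A" using r by auto
    show "\<forall>y\<in>?A. \<exists>k. (nxt M ^^ k) r = y" using pm_facts(10)[OF pm] r by auto
  qed
  ultimately show ?thesis by simp
qed

lemma fstep_in: "plane_map M \<Longrightarrow> d \<in> darts M \<Longrightarrow> fstep M d \<in> darts M"
  unfolding fstep_def by (auto dest: pm_facts(4,5))

lemma fstep_inj: "plane_map M \<Longrightarrow> inj_on (fstep M) (darts M)"
proof (rule inj_onI)
  fix x y assume pm: "plane_map M" and xy: "x \<in> darts M" "y \<in> darts M" "fstep M x = fstep M y"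
  have "rev M (nxt M x) = rev M (nxt M y)" using xy(3) unfolding fstep_def .
  hence "nxt M x = nxt M y" using pm_facts(5,9)[OF pm] xy(1,2) by (meson inj_onD)
  thus "x = y" using pm_facts(8)[OF pm] xy(1,2) by (meson inj_onD)
qed

lemma fstep_pred:
  assumes pm: "plane_map M" and d: "d \<in> darts M"
  shows "\<exists>p\<in>darts M. p \<in> face M d \<and> fstep M p = d"
proof -
  have "\<exists>n>0. (fstep M ^^ n) d = d"
    using funpow_cycle[of "darts M" "fstep M" d] pm_facts(1)[OF pm] fstep_inj[OF pm]
      fstep_in[OF pm] d by blast
  then obtain n where n: "n > 0" "(fstep M ^^ n) d = d" by blast
  define p where "p = (fstep M ^^ (n - 1)) d"
  have "fstep M p = (fstep M ^^ Suc (n - 1)) d" unfolding p_def by simp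
  also have "Suc (n - 1) = n" using n by simp
  finally have "fstep M p = d" using n by simp
  moreover have "p \<in> face M d" unfolding p_def face_def by blast
  moreover have "p \<in> darts M" unfolding p_def using funpow_in[of "fstep M" "darts M"] fstep_in[OF pm] d by blast
  ultimately show ?thesis by blast
qed

lemma conn_step: "a \<in> verts M - S \<Longrightarrow> b \<in> verts M - S \<Longrightarrow> gadj M a b \<Longrightarrow> conn_minus M S a b"
  unfolding conn_minus_def by (rule r_into_rtranclp) simp

lemma conn_trans: "conn_minus M S a b \<Longrightarrow> conn_minus M S b c \<Longrightarrow> conn_minus M S a c"
  unfolding conn_minus_def by (rule rtranclp_trans)

lemma cross_edge:
  assumes pm: "plane_map M" and op: "one_plane M" and c: "c \<in> cross M"
    and r: "r \<in> darts M" "tail M r = c"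
  shows "gadj M (head M (nxt M r)) (head M ((nxt M ^^ 3) r))"
proof -
  have nr: "nxt M r \<in> darts M" "tail M (nxt M r) = c" using pm_facts(5,7)[OF pm] r by auto
  have x: "head M (nxt M r) \<in> verts M" using op c nr unfolding one_plane_def by auto
  let ?d = "rev M (nxt M r)"
  have dd: "?d \<in> darts M" using pm_facts(4)[OF pm] nr by auto
  have td: "tail M ?d = head M (nxt M r)" unfolding head_def ..
  have hd: "head M ?d = c" unfolding head_def using pm_facts(6)[OF pm] nr by auto
  have "gend M ?d = head M ((nxt M ^^ 2) (rev M ?d))" unfolding gend_def using hd c by simp
  also have "rev M ?d = nxt M r" using pm_facts(6)[OF pm] nr by auto
  also have "(nxt M ^^ 2) (nxt M r) = (nxt M ^^ 3) r" by (simp add: numeral_eq_Suc funpow_swap1)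
  finally show ?thesis unfolding gadj_def using dd td x by blast
qed

theorem claim2:
  fixes M :: "('a, 'd) pmap"
  assumes "plane_map M" and "one_plane M" and "full M" and "kite_assumption M"
    and "min_separating M S" and "v \<in> S"
    and "d1 \<in> darts M" and "tail M d1 = v" and "gend M d1 = t1"
    and "d2 \<in> darts M" and "tail M d2 = v" and "gend M d2 = t2"
    and "t1 \<in> verts M - S" and "t2 \<in> verts M - S" and "\<not> conn_minus M S t1 t2"
  shows "\<exists>k. (\<forall>j\<le>k. (nxt M ^^ j) d1 \<noteq> d2) \<and>
             transition_face M S (face M ((nxt M ^^ k) d1))"
proof (rule ccontr)
  assume neg: "\<not> ?thesis"
  note pm = assms(1)
  note op = assms(2)
  have Sv: "S \<subseteq> verts M" using assms(5) unfolding min_separating_def separating_def by auto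
  have vv: "v \<in> verts M" using Sv assms(6) by auto
  have disj: "verts M \<inter> cross M = {}" using pm_facts(2)[OF pm] .
  have fullD: "\<And>d. d \<in> darts M \<Longrightarrow> tail M d \<in> cross M \<Longrightarrow> gadj M (head M d) (head M (nxt M d))"
    using assms(3) unfolding full_def by auto
  have kiteD: "\<And>d. d \<in> darts M \<Longrightarrow> tail M d \<in> cross M \<Longrightarrow> kite_face M d"
    using assms(4) fullD unfolding kite_assumption_def by auto
  have headD: "\<And>d. d \<in> darts M \<Longrightarrow> head M d \<in> verts M \<union> cross M"
    unfolding head_def using pm_facts(3,4)[OF pm] by auto
  have headrev: "\<And>d. d \<in> darts M \<Longrightarrow> head M (rev M d) = tail M d"
    unfolding head_def using pm_facts(6)[OF pm] by auto
  have tailrev: "\<And>d. tail M (rev M d) = head M d" unfolding head_def ..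
  define e where "e j = (nxt M ^^ j) d1" for j
  have eD: "\<And>j. e j \<in> darts M" unfolding e_def using nxt_pow_in[OF pm assms(7)] .
  have et: "\<And>j. tail M (e j) = v" unfolding e_def using nxt_pow_tail[OF pm assms(7)] assms(8) by simp
  have eS: "\<And>j. e (Suc j) = nxt M (e j)" unfolding e_def by simp
  have "\<exists>n. e n = d2" unfolding e_def using pm_facts(10)[OF pm assms(7,10)] assms(8,11) by simp
  define m where "m = (LEAST n. e n = d2)"
  have em: "e m = d2" unfolding m_def using LeastI_ex[OF \<open>\<exists>n. e n = d2\<close>] .
  have mleast: "\<And>j. j < m \<Longrightarrow> e j \<noteq> d2" unfolding m_def using not_less_Least by blast
  have "t1 \<noteq> t2" using assms(15) unfolding conn_minus_def by auto
  hence "d1 \<noteq> d2" using assms(9,12) by auto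
  hence m0: "m > 0" using em unfolding e_def by (cases m) auto
  have NT: "\<And>k. k < m \<Longrightarrow> \<not> transition_face M S (face M (e k))"
    using neg mleast unfolding e_def by (meson le_less_trans)
  have Fin: "\<And>k. face M (e k) \<in> faces M" unfolding faces_def using eD by blast
  have N1: "\<And>k d. k < m \<Longrightarrow> d \<in> face M (e k) \<Longrightarrow> tail M d \<in> S \<Longrightarrow> head M d \<notin> S"
    using NT Fin unfolding transition_face_def by blast
  have N2: "\<And>k d d'. k < m \<Longrightarrow> d \<in> face M (e k) \<Longrightarrow> d' \<in> face M (e k) \<Longrightarrow>
       tail M d \<in> verts M - S \<Longrightarrow> tail M d' \<in> verts M - S \<Longrightarrow> conn_minus M S (tail M d) (tail M d')"
    using NT Fin unfolding transition_face_def by blast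
  have inF0: "\<And>d. d \<in> face M d" unfolding face_def by (auto intro: exI[of _ 0])
  have inF1: "\<And>d. fstep M d \<in> face M d" unfolding face_def by (auto intro: exI[of _ 1])
  have fse: "\<And>k. fstep M (e k) = rev M (e (Suc k))" unfolding fstep_def eS ..
  have hS: "\<And>k. k < m \<Longrightarrow> head M (e k) \<notin> S"
    using N1 inF0 et assms(6) by metis
  have hS1: "\<And>k. k < m \<Longrightarrow> head M (e (Suc k)) \<notin> S"
  proof -
    fix k assume k: "k < m"
    have "rev M (e (Suc k)) \<in> face M (e k)" using inF1 fse by metis
    moreover have "head M (rev M (e (Suc k))) = v" using headrev eD et by simp
    ultimately show "head M (e (Suc k)) \<notin> S" using N1[OF k] tailrev assms(6) by metis
  qed
  have realstep: "\<And>k. k < m \<Longrightarrow> head M (e k) \<in> verts M \<Longrightarrow> head M (e (Suc k)) \<in> verts M \<Longrightarrow>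
      conn_minus M S (head M (e k)) (head M (e (Suc k)))"
  proof -
    fix k assume k: "k < m" and h: "head M (e k) \<in> verts M" "head M (e (Suc k)) \<in> verts M"
    obtain p where p: "p \<in> darts M" "p \<in> face M (e k)" "fstep M p = e k"
      using fstep_pred[OF pm eD] by blast
    have "nxt M p = rev M (e k)"
      using p(3) pm_facts(6)[OF pm, of "nxt M p"] pm_facts(5)[OF pm p(1)] unfolding fstep_def by metis
    hence tp: "tail M p = head M (e k)" using pm_facts(7)[OF pm p(1)] tailrev by metis
    have "rev M (e (Suc k)) \<in> face M (e k)" using inF1 fse by metis
    from N2[OF k p(2) this] show "conn_minus M S (head M (e k)) (head M (e (Suc k)))"
      using tp tailrev h hS[OF k] hS1[OF k] by simp
  qed
  have CR1: "\<And>k. k < m \<Longrightarrow> head M (e k) \<in> cross M \<Longrightarrow>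
      head M (e (Suc k)) = head M ((nxt M ^^ 3) (rev M (e k))) \<and> head M (e (Suc k)) \<in> verts M"
  proof -
    fix k assume k: "k < m" and c: "head M (e k) \<in> cross M"
    define r where "r = rev M (e k)"
    have r: "r \<in> darts M" "tail M r = head M (e k)" unfolding r_def using pm_facts(4)[OF pm] eD tailrev by auto
    define p where "p = (nxt M ^^ 3) r"
    have pD: "p \<in> darts M" unfolding p_def using nxt_pow_in[OF pm r(1)] .
    have tp: "tail M p = head M (e k)" unfolding p_def using nxt_pow_tail[OF pm r(1)] r(2) by simp
    have "nxt M p = (nxt M ^^ 4) r" unfolding p_def by (simp add: numeral_eq_Suc)
    also have "\<dots> = r" using nxt4[OF pm op c r] .
    finally have np: "nxt M p = r" .
    have fp: "fstep M p = e k" unfolding fstep_def np r_def using pm_facts(6)[OF pm eD] .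
    have kf: "kite_face M p" using kiteD[OF pD] tp c by simp
    have "(fstep M ^^ 2) p = fstep M (fstep M p)" by (simp add: numeral_eq_Suc)
    also have "\<dots> = rev M (e (Suc k))" using fp fse by simp
    finally have "tail M (rev M (e (Suc k))) = head M p" using kf unfolding kite_face_def by metis
    hence "head M (e (Suc k)) = head M p" using tailrev by simp
    moreover have "head M p \<in> verts M" using kf unfolding kite_face_def by simp
    ultimately show "head M (e (Suc k)) = head M ((nxt M ^^ 3) (rev M (e k))) \<and> head M (e (Suc k)) \<in> verts M"
      unfolding p_def r_def by simp
  qed
  have CR2: "\<And>k. k < m \<Longrightarrow> head M (e (Suc k)) \<in> cross M \<Longrightarrow>
      head M (e k) = head M (nxt M (rev M (e (Suc k)))) \<and> head M (e k) \<in> verts M"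
  proof -
    fix k assume k: "k < m" and c: "head M (e (Suc k)) \<in> cross M"
    define q where "q = rev M (e (Suc k))"
    have q: "q \<in> darts M" "tail M q = head M (e (Suc k))" unfolding q_def using pm_facts(4)[OF pm] eD tailrev by auto
    have kf: "kite_face M q" using kiteD[OF q(1)] q(2) c by simp
    have q2D: "(fstep M ^^ 2) q \<in> darts M" using funpow_in[of "fstep M" "darts M"] fstep_in[OF pm] q(1) by blast
    have "fstep M ((fstep M ^^ 2) q) = (fstep M ^^ 3) q" by (simp add: numeral_eq_Suc)
    also have "\<dots> = q" using kf unfolding kite_face_def by simp
    also have "\<dots> = fstep M (e k)" unfolding q_def fse ..
    finally have "(fstep M ^^ 2) q = e k" using fstep_inj[OF pm] q2D eD by (meson inj_onD)
    hence "head M (e k) = head M (nxt M q)" using kf unfolding kite_face_def by metis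
    moreover have "head M (nxt M q) \<in> verts M" using kf unfolding kite_face_def by simp
    ultimately show "head M (e k) = head M (nxt M (rev M (e (Suc k)))) \<and> head M (e k) \<in> verts M"
      unfolding q_def by simp
  qed
  define rr where "rr j = (if head M (e j) \<in> verts M then head M (e j) else head M (e (Suc j)))" for j
  have claim: "\<And>j. j < m \<Longrightarrow> conn_minus M S t1 (rr j)"
  proof -
    fix j assume "j < m"
    then show "conn_minus M S t1 (rr j)"
    proof (induction j)
      case 0
      show ?case
      proof (cases "head M (e 0) \<in> verts M")
        case True
        hence "head M d1 \<notin> cross M" using disj unfolding e_def by auto
        hence "t1 = head M (e 0)" using assms(9) unfolding gend_def e_def by simp
        then show ?thesis unfolding rr_def conn_minus_def using True by simp
      next
        case False
        hence c: "head M d1 \<in> cross M" using headD[OF assms(7)] unfolding e_def by auto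
        have t1: "t1 = head M ((nxt M ^^ 2) (rev M d1))" using assms(9) c unfolding gend_def by simp
        have r: "rev M d1 \<in> darts M" "tail M (rev M d1) = head M d1" using pm_facts(4)[OF pm assms(7)] tailrev by auto
        have dD: "(nxt M ^^ 2) (rev M d1) \<in> darts M" "tail M ((nxt M ^^ 2) (rev M d1)) = head M d1"
          using nxt_pow_in[OF pm r(1)] nxt_pow_tail[OF pm r(1)] r(2) by auto
        have g: "gadj M t1 (head M ((nxt M ^^ 3) (rev M d1)))"
          using fullD[OF dD(1)] dD(2) c t1 by (simp add: numeral_eq_Suc)
        have cr: "head M (e (Suc 0)) = head M ((nxt M ^^ 3) (rev M d1)) \<and> head M (e (Suc 0)) \<in> verts M"
        proof -
          have e0: "e 0 = d1" unfolding e_def by simp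
          have "head M (e 0) \<in> cross M" using c e0 by simp
          from CR1[OF 0 this] e0 show ?thesis by metis
        qed
        have "head M (e (Suc 0)) \<notin> S" using hS1[OF 0] by simp
        hence "conn_minus M S t1 (head M (e (Suc 0)))" using conn_step[of t1 M S] g cr assms(13) by auto
        then show ?thesis unfolding rr_def using False by simp
      qed
    next
      case (Suc j)
      hence j: "j < m" by simp
      have IH: "conn_minus M S t1 (rr j)" using Suc by simp
      show ?case
      proof (cases "head M (e (Suc j)) \<in> verts M")
        case True
        show ?thesis
        proof (cases "head M (e j) \<in> verts M")
          case True2: True
          then show ?thesis using IH realstep[OF j True2 True] conn_trans True
            unfolding rr_def by simp
        next
          case False
          then show ?thesis using IH True unfolding rr_def by simp
        qed
      next
        case False
        hence c: "head M (e (Suc j)) \<in> cross M" using headD[OF eD] by auto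
        have x: "head M (e j) = head M (nxt M (rev M (e (Suc j)))) \<and> head M (e j) \<in> verts M"
          using CR2[OF j c] .
        have w: "head M (e (Suc (Suc j))) = head M ((nxt M ^^ 3) (rev M (e (Suc j))))
           \<and> head M (e (Suc (Suc j))) \<in> verts M" using CR1[OF Suc.prems c] .
        have r: "rev M (e (Suc j)) \<in> darts M" "tail M (rev M (e (Suc j))) = head M (e (Suc j))"
          using pm_facts(4)[OF pm eD] tailrev by auto
        have g: "gadj M (head M (e j)) (head M (e (Suc (Suc j))))"
          using cross_edge[OF pm op c r] x w by simp
        have a1: "head M (e j) \<in> verts M - S" using x hS[OF j] by blast
        have a2: "head M (e (Suc (Suc j))) \<in> verts M - S" using w hS1[OF Suc.prems] by blast
        have "conn_minus M S (head M (e j)) (head M (e (Suc (Suc j))))"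
          using conn_step[OF a1 a2 g] .
        moreover have "rr j = head M (e j)" unfolding rr_def using a1 by simp
        moreover have "rr (Suc j) = head M (e (Suc (Suc j)))" unfolding rr_def using False by simp
        ultimately show ?thesis using IH conn_trans by metis
      qed
    qed
  qed
  define k where "k = m - 1"
  have k: "k < m" "Suc k = m" unfolding k_def using m0 by auto
  have Ck: "conn_minus M S t1 (rr k)" using claim[OF k(1)] .
  have "conn_minus M S t1 t2"
  proof (cases "head M (e m) \<in> verts M")
    case True
    hence "head M d2 \<notin> cross M" using disj em by auto
    hence t2: "t2 = head M (e m)" using assms(12) em unfolding gend_def by simp
    show ?thesis
    proof (cases "head M (e k) \<in> verts M")
      case True2: True
      then show ?thesis using Ck realstep[OF k(1) True2] True k(2) t2 conn_trans unfolding rr_def by simp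
    next
      case False
      then show ?thesis using Ck t2 k(2) unfolding rr_def by simp
    qed
  next
    case False
    hence c: "head M d2 \<in> cross M" using headD[OF eD] em by auto
    have x: "head M (e k) = head M (nxt M (rev M d2)) \<and> head M (e k) \<in> verts M"
    proof -
      have "head M (e (Suc k)) \<in> cross M" using c k(2) em by simp
      from CR2[OF k(1) this] k(2) em show ?thesis by metis
    qed
    have t2: "t2 = head M ((nxt M ^^ 2) (rev M d2))" using assms(12) c unfolding gend_def by simp
    have r: "rev M d2 \<in> darts M" "tail M (rev M d2) = head M d2" using pm_facts(4)[OF pm assms(10)] tailrev by auto
    have nD: "nxt M (rev M d2) \<in> darts M" "tail M (nxt M (rev M d2)) = head M d2"
      using pm_facts(5,7)[OF pm r(1)] r(2) by auto
    have g: "gadj M (head M (e k)) t2"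
      using fullD[OF nD(1)] nD(2) c x t2 by (simp add: numeral_eq_Suc)
    have a1: "head M (e k) \<in> verts M - S" using x hS[OF k(1)] by blast
    have "conn_minus M S (head M (e k)) t2" using conn_step[OF a1 assms(14) g] .
    moreover have "rr k = head M (e k)" unfolding rr_def using a1 by simp
    ultimately show ?thesis using Ck conn_trans by metis
  qed
  then show False using assms(15) by simp
qed

end
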